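(* Let $0<A_0<A_1$, $0<\sigma<1$ and let $p\ge2$ be an integer. Then the set of $b\in[0,1]$ for which there are infinitely many pairs of integers $0<m<n$ satisfying $$A_0<\frac{b^{p^m}}{\sigma^{n-m}}<A_1$$ is a dense $G_\delta$ subset of $[0,1]$ of full Lebesgue measure. *)

theory Defs
  imports "HOL-Analysis.Analysis"
begin

definition good_set :: "real \<Rightarrow> real \<Rightarrow> real \<Rightarrow> nat \<Rightarrow> real set" where
  "good_set A0 A1 \<sigma> p = {b \<in> {0..1}. infinite ({(m, n). 0 < m \<and> m < n \<and>
       A0 < b ^ (p ^ m) / \<sigma> ^ (n - m) \<and> b ^ (p ^ m) / \<sigma> ^ (n - m) < A1} :: (nat \<times> nat) set)}"

end

theory Submission
  imports Defs begin


lemma frac_nat_mult: "frac (real n * frac x) = frac (real n * x)"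
proof -
  have e: "real n * frac x = real n * x - of_int (int n * \<lfloor>x\<rfloor>)"
    by (simp add: frac_def algebra_simps)
  have h: "frac (z - of_int k) = frac z" for z :: real and k
    by (simp add: frac_def)
  show ?thesis by (subst e) (rule h)
qed

lemma aff_img:
  fixes S :: "real set" and b q :: real
  assumes S: "S \<in> lmeasurable" and q: "q > 0"
  shows "(\<lambda>s. (b + s)/q) ` S \<in> lmeasurable"
    and "measure lebesgue ((\<lambda>s. (b + s)/q) ` S) = measure lebesgue S / q"
proof -
  have eq: "(\<lambda>s. (b + s)/q) = (\<lambda>x. (1/q) *\<^sub>R x + b/q)"
    by (auto simp: fun_eq_iff add_divide_distrib)
  have eqv: "(\<lambda>s. (b + s)/q) ` S = (\<lambda>x. -b + q * x) -` S"
    using q by (force simp: field_simps)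
  have "(\<lambda>x. -b + (\<Sum>j\<in>Basis. (q * (x \<bullet> j)) *\<^sub>R j)) \<in> lebesgue \<rightarrow>\<^sub>M lebesgue"
    using q by (intro lebesgue_affine_measurable) auto
  then have meas: "(\<lambda>x::real. -b + q * x) \<in> lebesgue \<rightarrow>\<^sub>M lebesgue" by simp
  have "(\<lambda>x. -b + q * x) -` S \<inter> space lebesgue \<in> sets lebesgue"
    using measurable_sets[OF meas] S by (auto simp: fmeasurable_def)
  then have sets: "(\<lambda>s. (b + s)/q) ` S \<in> sets lebesgue" using eqv by simp
  have "emeasure lebesgue ((\<lambda>s. (b + s)/q) ` S) = \<bar>1/q\<bar> ^ DIM(real) * emeasure lebesgue S"
    unfolding eq by (rule emeasure_lebesgue_affine)
  also have "\<dots> < \<infinity>"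
  proof -
    from S have f: "emeasure lebesgue S < \<infinity>" unfolding fmeasurable_def by blast
    show ?thesis using f ennreal_less_top ennreal_mult_less_top by (metis infinity_ennreal_def)
  qed
  finally show "(\<lambda>s. (b + s)/q) ` S \<in> lmeasurable" using sets by (simp add: fmeasurable_def)
  have "measure lebesgue ((\<lambda>s. (b + s)/q) ` S) = \<bar>1/q\<bar> ^ DIM(real) * measure lebesgue S"
    unfolding eq by (rule measure_lebesgue_affine)
  then show "measure lebesgue ((\<lambda>s. (b + s)/q) ` S) = measure lebesgue S / q" using q by simp
qed

lemma decomp:
  fixes y :: real and Q :: nat
  assumes "Q > 0" "y \<in> {0..<1}" "frac (real Q * y) \<in> S"
  shows "y \<in> (\<Union>b\<in>{0..<Q}. (\<lambda>s. (real b + s)/Q) ` S)"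
proof -
  define b where "b = nat \<lfloor>real Q * y\<rfloor>"
  have z0: "real Q * y \<ge> 0" "real Q * y < Q" using assms by auto
  then have bl: "b < Q" unfolding b_def by (simp add: nat_less_iff floor_less_iff)
  have "real b = of_int \<lfloor>real Q * y\<rfloor>" unfolding b_def using z0 by simp
  then have "y = (real b + frac (real Q * y)) / Q" using assms by (simp add: frac_def)
  then show ?thesis using bl assms(3) by (intro UN_I[of b]) auto
qed

fun Hs :: "nat \<Rightarrow> nat \<Rightarrow> nat \<Rightarrow> real set" where
  "Hs q a 0 = {0..<1}"
| "Hs q a (Suc K) = (\<Union>b\<in>{0..<q}-{a}. (\<lambda>s. (real b + s)/q) ` Hs q a K)"

lemma Hs_meas:
  assumes "q > 0" "a < q"
  shows "Hs q a K \<in> lmeasurable \<and> measure lebesgue (Hs q a K) \<le> ((real q - 1)/q)^K"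
proof (induction K)
  case 0
  have "{0..<1::real} \<in> lmeasurable" by (intro bounded_set_imp_lmeasurable) auto
  then show ?case by simp
next
  case (Suc K)
  have m: "(\<lambda>s. (real b + s)/q) ` Hs q a K \<in> lmeasurable" for b
    using aff_img(1)[of "Hs q a K" q] Suc assms by auto
  have lm: "Hs q a (Suc K) \<in> lmeasurable"
    using m by (auto intro!: fmeasurable.finite_UN)
  have "measure lebesgue (Hs q a (Suc K)) \<le>
     (\<Sum>b\<in>{0..<q}-{a}. measure lebesgue ((\<lambda>s. (real b + s)/q) ` Hs q a K))"
    using m by (simp only: Hs.simps) (rule measure_UNION_le, auto)
  also have "\<dots> = (\<Sum>b\<in>{0..<q}-{a}. measure lebesgue (Hs q a K) / q)"
    using aff_img(2)[of "Hs q a K" q] Suc assms by auto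
  also have "\<dots> = (real q - 1) * (measure lebesgue (Hs q a K) / q)"
    using assms by (simp add: of_nat_diff)
  also have "\<dots> \<le> (real q - 1) * (((real q - 1)/q)^K / q)"
    using Suc assms by (intro mult_left_mono divide_right_mono) auto
  also have "\<dots> = ((real q - 1)/q)^Suc K" by (simp add: field_simps)
  finally show ?case using lm by blast
qed

lemma Hs_cover:
  assumes "q > 0"
  shows "y \<in> {0..<1} \<Longrightarrow> (\<forall>i<K. frac (real q ^ i * y) \<notin> {real a/q..<(real a+1)/q}) \<Longrightarrow> y \<in> Hs q a K"
proof (induction K arbitrary: y)
  case 0
  then show ?case by simp
next
  case (Suc K)
  define b where "b = nat \<lfloor>real q * y\<rfloor>"
  define s where "s = frac (real q * y)"
  have z0: "real q * y \<ge> 0" "real q * y < q" using assms Suc by auto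
  then have bl: "b < q" unfolding b_def by (simp add: nat_less_iff floor_less_iff)
  have rb: "real b = of_int \<lfloor>real q * y\<rfloor>" unfolding b_def using z0 by simp
  then have yeq: "y = (real b + s) / q" using assms by (simp add: frac_def s_def)
  have s01: "s \<in> {0..<1}" by (simp add: s_def frac_lt_1)
  have "frac (real q ^ i * s) \<notin> {real a/q..<(real a+1)/q}" if "i < K" for i
  proof -
    have "frac (real q ^ i * s) = frac (real (q ^ i) * (real q * y))"
      unfolding s_def by (metis frac_nat_mult of_nat_power)
    also have "\<dots> = frac (real q ^ Suc i * y)" by (simp add: ac_simps)
    moreover have "frac (real q ^ Suc i * y) \<notin> {real a/q..<(real a+1)/q}"
      using Suc.prems(2) that by blast
    ultimately show ?thesis by (simp only: not_False_eq_True)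
  qed
  then have sH: "s \<in> Hs q a K" using Suc.IH s01 by blast
  have "b \<noteq> a"
  proof
    assume "b = a"
    then have "a \<le> real q * y" "real q * y < a + 1" using rb by linarith+
    then have "y \<in> {real a/q..<(real a+1)/q}" using assms by (auto simp: field_simps)
    moreover have "frac (real q ^ 0 * y) = y" using Suc.prems(1) by (simp add: frac_eq)
    ultimately show False using Suc.prems(2) by force
  qed
  then show ?case using bl sH yeq by auto
qed


lemma core:
  fixes c d :: real and p :: nat
  assumes c0: "0 \<le> c" and cd: "c < d" and d1: "d \<le> 1" and p2: "2 \<le> p"
  shows "negligible {y::real. \<exists>N. \<forall>m\<ge>N. frac (real p ^ m * y) \<notin> {c<..<d}}"
proof -
  have "1 < real p" using p2 by simp
  from real_arch_pow[OF this, of "2/(d-c)"] obtain r where r: "2/(d-c) < real p ^ r" by blast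
  define q where "q = p ^ r"
  have q0: "q > 0" using p2 by (simp add: q_def)
  have rq: "2/(d-c) < real q" using r by (simp add: q_def)
  then have q2: "2 / real q < d - c" using cd q0 by (simp add: field_simps)
  define a where "a = nat (\<lfloor>c * q\<rfloor> + 1)"
  have fl0: "\<lfloor>c * q\<rfloor> \<ge> 0" using c0 by simp
  have ra: "real a = of_int \<lfloor>c * q\<rfloor> + 1" unfolding a_def using fl0 by simp
  have a1: "c < real a / q" using ra q0 by (simp add: field_simps) linarith
  have "real a \<le> c * q + 1" using ra by linarith
  then have "(real a + 1)/q \<le> (c*q + 2)/q" by (intro divide_right_mono) auto
  also have "(c*q + 2)/q = c + 2/q" using q0 by (simp add: field_simps)
  finally have "(real a + 1)/q \<le> c + 2/q" .
  then have a2: "(real a + 1)/q < d" using q2 by linarith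
  then have "real a + 1 < d * q" using q0 by (simp add: field_simps)
  moreover have "d * q \<le> 1 * real q" using d1 by (intro mult_right_mono) auto
  ultimately have "real a + 1 < q" by simp
  then have aq: "a < q" by linarith
  have Isub: "{real a/q..<(real a+1)/q} \<subseteq> {c<..<d}" using a1 a2 by auto
  define E where "E N = {y\<in>{0..<1}. \<forall>m\<ge>N. frac (real p ^ m * y) \<notin> {c<..<d}}" for N
  have negE: "negligible (E N)" for N
    unfolding negligible_outer_le
  proof (intro allI impI)
    fix e :: real assume e: "e > 0"
    have "(real q - 1)/q < 1" using q0 by simp
    from real_arch_pow_inv[OF e this] obtain K where K: "((real q - 1)/q)^K < e" by blast
    have HK: "Hs q a K \<in> lmeasurable" "measure lebesgue (Hs q a K) \<le> ((real q - 1)/q)^K"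
      using Hs_meas[OF q0 aq] by auto
    define Q where "Q = p ^ N"
    have Q0: "Q > 0" using p2 by (simp add: Q_def)
    define T where "T = (\<Union>b\<in>{0..<Q}. (\<lambda>s. (real b + s)/Q) ` Hs q a K)"
    have m: "(\<lambda>s. (real b + s)/Q) ` Hs q a K \<in> lmeasurable" for b
      using aff_img(1)[OF HK(1), of Q] Q0 by auto
    have Tm: "T \<in> lmeasurable" unfolding T_def using m by (auto intro!: fmeasurable.finite_UN)
    have "measure lebesgue T \<le> (\<Sum>b\<in>{0..<Q}. measure lebesgue ((\<lambda>s. (real b + s)/Q) ` Hs q a K))"
      unfolding T_def using m by (intro measure_UNION_le) auto
    also have "\<dots> = (\<Sum>b\<in>{0..<Q}. measure lebesgue (Hs q a K) / Q)"
      using aff_img(2)[OF HK(1), of Q] Q0 by auto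
    also have "\<dots> = measure lebesgue (Hs q a K)" using Q0 by simp
    finally have Tle: "measure lebesgue T < e" using HK(2) K by linarith
    have "E N \<subseteq> T"
    proof
      fix y assume y: "y \<in> E N"
      define y' where "y' = frac (real Q * y)"
      have "frac (real q ^ i * y') \<notin> {real a/q..<(real a+1)/q}" for i
      proof -
        have "frac (real q ^ i * y') = frac (real (q ^ i) * (real Q * y))"
          unfolding y'_def by (metis frac_nat_mult of_nat_power)
        also have "\<dots> = frac (real p ^ (N + r * i) * y)"
          by (simp add: q_def Q_def power_add power_mult[symmetric] ac_simps)
        moreover have "frac (real p ^ (N + r * i) * y) \<notin> {c<..<d}"
          using y unfolding E_def by (simp only: mem_Collect_eq) (meson le_add1)
        ultimately show ?thesis using Isub by auto
      qed
      then have "y' \<in> Hs q a K" using Hs_cover[OF q0, of y' K a] by (simp add: y'_def frac_lt_1)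
      then show "y \<in> T" unfolding T_def using decomp[OF Q0, of y] y by (auto simp: E_def y'_def)
    qed
    then show "\<exists>T. E N \<subseteq> T \<and> T \<in> lmeasurable \<and> measure lebesgue T \<le> e"
      using Tm Tle by (intro exI[of _ T]) auto
  qed
  have sub: "{y::real. \<exists>N. \<forall>m\<ge>N. frac (real p ^ m * y) \<notin> {c<..<d}}
     \<subseteq> \<Union>((\<lambda>(N, j::int). (+) (of_int j) ` E N) ` UNIV)"
  proof
    fix y assume "y \<in> {y::real. \<exists>N. \<forall>m\<ge>N. frac (real p ^ m * y) \<notin> {c<..<d}}"
    then obtain N where N: "\<forall>m\<ge>N. frac (real p ^ m * y) \<notin> {c<..<d}" by blast
    have "frac (real p ^ m * frac y) = frac (real p ^ m * y)" for m
      by (metis frac_nat_mult of_nat_power)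
    then have "frac y \<in> E N" using N by (simp add: E_def frac_lt_1)
    moreover have "y = of_int \<lfloor>y\<rfloor> + frac y" by (simp add: frac_def)
    ultimately show "y \<in> \<Union>((\<lambda>(N, j::int). (+) (of_int j) ` E N) ` UNIV)"
      by (intro UnionI[of _ _ y] rangeI[of _ "(N, \<lfloor>y\<rfloor>)"] ) (auto intro: image_eqI)
  qed
  have "negligible (\<Union>((\<lambda>(N, j::int). (+) (of_int j) ` E N) ` UNIV))"
    by (rule negligible_countable_Union) (auto intro: negligible_translation negE)
  then show ?thesis using sub negligible_subset by blast
qed


lemma inf_pairs:
  fixes P :: "nat \<Rightarrow> nat \<Rightarrow> bool"
  shows "infinite {(m, n). 0 < m \<and> m < n \<and> P m n} \<longleftrightarrow> (\<forall>N. \<exists>n\<ge>N. \<exists>m. 0 < m \<and> m < n \<and> P m n)"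
proof
  assume inf: "infinite {(m, n). 0 < m \<and> m < n \<and> P m n}"
  show "\<forall>N. \<exists>n\<ge>N. \<exists>m. 0 < m \<and> m < n \<and> P m n"
  proof (rule ccontr)
    assume "\<not> (\<forall>N. \<exists>n\<ge>N. \<exists>m. 0 < m \<and> m < n \<and> P m n)"
    then obtain N where N: "\<And>n m. n \<ge> N \<Longrightarrow> 0 < m \<Longrightarrow> m < n \<Longrightarrow> \<not> P m n" by blast
    have "{(m, n). 0 < m \<and> m < n \<and> P m n} \<subseteq> {..<N} \<times> {..<N}"
    proof
      fix x assume "x \<in> {(m, n). 0 < m \<and> m < n \<and> P m n}"
      then obtain m n where x: "x = (m, n)" and h: "0 < m" "m < n" "P m n" by blast
      have "n < N" using N[of n m] h by (meson not_le)
      then show "x \<in> {..<N} \<times> {..<N}" using x h by simp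
    qed
    moreover have "finite ({..<N} \<times> {..<N::nat})" by simp
    ultimately show False using inf finite_subset by blast
  qed
next
  assume H: "\<forall>N. \<exists>n\<ge>N. \<exists>m. 0 < m \<and> m < n \<and> P m n"
  show "infinite {(m, n). 0 < m \<and> m < n \<and> P m n}"
  proof
    assume "finite {(m, n). 0 < m \<and> m < n \<and> P m n}"
    then have "finite (snd ` {(m, n). 0 < m \<and> m < n \<and> P m n})" by (rule finite_imageI)
    then have "\<exists>B. \<forall>x\<in>snd ` {(m, n). 0 < m \<and> m < n \<and> P m n}. x \<le> B"
      by (simp only: finite_nat_set_iff_bounded_le)
    then obtain B where B: "\<forall>x\<in>snd ` {(m, n). 0 < m \<and> m < n \<and> P m n}. x \<le> B"
      by (rule exE)
    obtain n m where nm: "n \<ge> Suc B" "0 < m" "m < n" "P m n" using H by blast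
    have "n \<in> snd ` {(m, n). 0 < m \<and> m < n \<and> P m n}"
      by (rule image_eqI[of n snd "(m, n)"]) (use nm in simp_all)
    then have "n \<le> B" using B by (rule bspec[rotated])
    then show False using nm(1) by simp
  qed
qed

lemma pair_ineq:
  fixes b \<sigma> A0 A1 y L w :: real and p m k :: nat
  assumes \<sigma>: "0 < \<sigma>" and L: "L = - ln \<sigma>" and y: "b = exp (-L*y)"
    and z: "real p ^ m * y = real k + w" and A: "0 < A0" "0 < A1"
    and w1: "ln A0 < -L*w" and w2: "-L*w < ln A1"
  shows "A0 < b^(p^m)/\<sigma>^k \<and> b^(p^m)/\<sigma>^k < A1"
proof -
  have "b^(p^m) = exp (real (p^m) * (-L*y))" by (simp only: y exp_of_nat_mult)
  moreover have "\<sigma>^k = exp (real k * (-L))" using \<sigma> by (simp add: L exp_of_nat_mult)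
  ultimately have "b^(p^m)/\<sigma>^k = exp (real (p^m) * (-L*y) - real k * (-L))"
    by (simp only: exp_diff)
  also have "real (p^m) * (-L*y) - real k * (-L) = -L*w"
    using z by (simp add: algebra_simps)
  finally have e: "b^(p^m)/\<sigma>^k = exp (-L*w)" .
  show ?thesis unfolding e using w1 w2 A
    by (metis exp_less_mono exp_ln)
qed


lemma good_set_alt:
  "good_set A0 A1 \<sigma> p = {b \<in> {0..1}. \<forall>N. \<exists>n\<ge>N. \<exists>m. 0 < m \<and> m < n \<and>
       A0 < b ^ (p ^ m) / \<sigma> ^ (n - m) \<and> b ^ (p ^ m) / \<sigma> ^ (n - m) < A1}"
  unfolding good_set_def by (simp only: inf_pairs)


lemma null_bad:
  fixes A0 A1 \<sigma> :: real and p :: nat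
  assumes A0: "0 < A0" and A01: "A0 < A1" and s0: "0 < \<sigma>" and s1: "\<sigma> < 1" and p2: "2 \<le> p"
  shows "negligible ({0..1} - good_set A0 A1 \<sigma> p)"
proof -
  define L where "L = - ln \<sigma>"
  have L0: "L > 0" using s0 s1 by (simp add: L_def)
  have lnA: "ln A0 < ln A1" using A0 A01 by simp
  define \<theta> where "\<theta> = -(ln A0 + ln A1)/(2*L)"
  define rr where "rr = (ln A1 - ln A0)/(2*L)"
  have rr0: "rr > 0" using lnA L0 by (simp add: rr_def)
  have th1: "\<theta> - rr = - ln A1 / L" using L0 by (simp add: \<theta>_def rr_def field_simps)
  have th2: "\<theta> + rr = - ln A0 / L" using L0 by (simp add: \<theta>_def rr_def field_simps)
  define j where "j = \<lfloor>\<theta>\<rfloor>"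
  define t where "t = \<theta> - of_int j"
  have t01: "0 \<le> t" "t < 1" unfolding t_def j_def by linarith+
  define c where "c = t"
  define d where "d = t + min rr (1 - t)"
  have cd: "0 \<le> c" "c < d" "d \<le> 1" using t01 rr0 by (auto simp: c_def d_def)
  define B where "B = {y::real. \<exists>N. \<forall>m\<ge>N. frac (real p ^ m * y) \<notin> {c<..<d}}"
  have negB: "negligible B" unfolding B_def using core[OF cd p2] .
  define g where "g = (\<lambda>y::real. exp (-L*y))"
  have "(g has_real_derivative (exp(-L*x) * (-L))) (at x)" for x
    unfolding g_def by (auto intro!: derivative_eq_intros)
  then have "g differentiable (at x)" for x
    by (meson differentiableI has_field_derivative_imp_has_derivative)
  then have gdiff: "g differentiable_on B"
    by (simp add: differentiable_at_imp_differentiable_on)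
  have neggB: "negligible (g ` B)"
    by (rule negligible_differentiable_image_negligible[OF order_refl negB gdiff])
  have sub: "{0..1} - good_set A0 A1 \<sigma> p \<subseteq> {0, 1} \<union> g ` B"
  proof
    fix b assume b: "b \<in> {0..1} - good_set A0 A1 \<sigma> p"
    show "b \<in> {0, 1} \<union> g ` B"
    proof (cases "b = 0 \<or> b = 1")
      case True then show ?thesis by auto
    next
      case False
      then have b01: "0 < b" "b < 1" using b by auto
      define y where "y = - ln b / L"
      have "ln b < 0" using b01 by simp
      then have y0: "y > 0" using L0 by (simp add: y_def divide_neg_pos)
      have gy: "g y = b" using L0 b01 by (simp add: g_def y_def)
      have "y \<in> B"
      proof (rule ccontr)
        assume yB: "y \<notin> B"
        have yB': "\<forall>N'. \<exists>m\<ge>N'. frac (real p ^ m * y) \<in> {c<..<d}"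
          using yB unfolding B_def by auto
        have "b \<in> good_set A0 A1 \<sigma> p"
          unfolding good_set_alt
        proof (intro CollectI conjI allI)
          show "b \<in> {0..1}" using b01 by auto
          fix N
          define M0 where "M0 = nat \<lceil>(of_int j + 1) / y\<rceil>"
          obtain m where m: "m \<ge> max (max N 1) M0" and fm: "frac (real p ^ m * y) \<in> {c<..<d}"
            using spec[OF yB', of "max (max N 1) M0"] by blast
          define z where "z = real p ^ m * y"
          define i where "i = \<lfloor>z\<rfloor>"
          define s where "s = frac z"
          have "real m \<ge> (of_int j + 1) / y" using m unfolding M0_def by linarith
          then have "real m * y \<ge> of_int j + 1" using y0 by (simp add: field_simps)
          moreover have "real m \<le> real p ^ m"
          proof -
            have "m < 2 ^ m" by simp
            also have "(2::nat) ^ m \<le> p ^ m" using p2 by (simp add: power_mono)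
            finally show ?thesis by (metis less_imp_le of_nat_le_iff of_nat_power)
          qed
          moreover have "real m * y \<le> real p ^ m * y"
            by (rule mult_right_mono) (use y0 \<open>real m \<le> real p ^ m\<close> in auto)
          ultimately have "z \<ge> of_int j + 1" unfolding z_def by linarith
          then have ij: "i \<ge> j + 1" unfolding i_def by linarith
          define k where "k = nat (i - j)"
          have k1: "k \<ge> 1" using ij by (simp add: k_def)
          have rk: "real k = of_int i - of_int j" using ij by (simp add: k_def)
          define w where "w = s + of_int j"
          have zk: "real p ^ m * y = real k + w"
            unfolding rk w_def s_def z_def[symmetric] i_def by (simp add: frac_def)
          have sc: "c < s" "s < d" using fm by (auto simp: s_def z_def)
          have "w > - ln A1 / L" using sc th1 rr0 unfolding w_def c_def t_def by linarith
          have wl: "- ln A1 < L * w" using \<open>w > - ln A1 / L\<close> L0 by (simp add: field_simps)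
          have "w < - ln A0 / L" using sc th2 min.cobounded1[of rr "1-t"] unfolding w_def d_def t_def by linarith
          then have wu: "L * w < - ln A0" using L0 by (simp add: field_simps)
          have bexp: "b = exp (-L*y)" using gy unfolding g_def by simp
          have A1p: "0 < A1" using A0 A01 by linarith
          have wl': "ln A0 < -L*w" using wu by simp
          have wu': "-L*w < ln A1" using wl by simp
          have ineq: "A0 < b^(p^m)/\<sigma>^k \<and> b^(p^m)/\<sigma>^k < A1"
            by (rule pair_ineq[OF s0 L_def bexp zk A0 A1p wl' wu'])
          have nm: "m + k - m = k" by simp
          have "N \<le> m + k" "0 < m" "m < m + k" using m k1 by auto
          then show "\<exists>n\<ge>N. \<exists>m. 0 < m \<and> m < n \<and> A0 < b ^ (p ^ m) / \<sigma> ^ (n - m) \<and> b ^ (p ^ m) / \<sigma> ^ (n - m) < A1"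
          proof -
            have "A0 < b^(p^m)/\<sigma>^(m + k - m) \<and> b^(p^m)/\<sigma>^(m + k - m) < A1"
              using ineq by (simp only: nm)
            then show ?thesis using \<open>N \<le> m + k\<close> \<open>0 < m\<close> \<open>m < m + k\<close> by blast
          qed
        qed
        then show False by (rule DiffD2[OF b])
      qed
      then show ?thesis by (intro UnI2 image_eqI[of b g y]) (simp_all add: gy)
    qed
  qed
  have "negligible ({0, 1::real})" by (rule negligible_finite) simp
  then have "negligible ({0, 1} \<union> g ` B)" using neggB by (rule negligible_Un)
  then show ?thesis using sub negligible_subset by blast
qed


theorem mainTheorem2:
  fixes A0 A1 \<sigma> :: real and p :: nat
  assumes "0 < A0" "A0 < A1" "0 < \<sigma>" "\<sigma> < 1" "2 \<le> p"
  shows "gdelta_in (top_of_set {0..1}) (good_set A0 A1 \<sigma> p)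
     \<and> {0..1} \<subseteq> closure (good_set A0 A1 \<sigma> p)
     \<and> good_set A0 A1 \<sigma> p \<in> sets lebesgue
     \<and> emeasure lebesgue ({0..1} - good_set A0 A1 \<sigma> p) = 0"
proof -
  let ?G = "good_set A0 A1 \<sigma> p"
  have neg: "negligible ({0..1} - ?G)" by (rule null_bad[OF assms])
  have null: "{0..1} - ?G \<in> null_sets lebesgue" using neg negligible_iff_null_sets by blast
  have Gsub: "?G \<subseteq> {0..1}" unfolding good_set_def by auto
  have Geq: "?G = {0..1} - ({0..1} - ?G)" using Gsub by blast
  have I01: "{0..1::real} \<in> sets lebesgue" by simp
  have meas: "?G \<in> sets lebesgue"
    by (subst Geq) (rule sets.Diff[OF I01 null_setsD2[OF null]])
  have em: "emeasure lebesgue ({0..1} - ?G) = 0" using null by (rule null_setsD1)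
  define U where "U N = {b::real. \<exists>n\<ge>N. \<exists>m. 0 < m \<and> m < n \<and>
       A0 < b ^ (p ^ m) / \<sigma> ^ (n - m) \<and> b ^ (p ^ m) / \<sigma> ^ (n - m) < A1}" for N
  have openU: "open (U N)" for N
  proof -
    have "U N = (\<Union>n\<in>{N..}. \<Union>m\<in>{0<..<n}. {b. A0 < b ^ (p ^ m) / \<sigma> ^ (n - m)} \<inter>
        {b. b ^ (p ^ m) / \<sigma> ^ (n - m) < A1})" (is "_ = ?R")
    proof (intro set_eqI iffI)
      fix b assume "b \<in> U N"
      then obtain n m where h: "N \<le> n" "0 < m" "m < n" "A0 < b ^ (p ^ m) / \<sigma> ^ (n - m)"
        "b ^ (p ^ m) / \<sigma> ^ (n - m) < A1" unfolding U_def by blast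
      show "b \<in> ?R" by (rule UN_I[of n], use h in simp, rule UN_I[of m]) (use h in simp_all)
    next
      fix b assume "b \<in> ?R"
      then obtain n m where h: "N \<le> n" "0 < m" "m < n" "A0 < b ^ (p ^ m) / \<sigma> ^ (n - m)"
        "b ^ (p ^ m) / \<sigma> ^ (n - m) < A1" by auto
      then show "b \<in> U N" unfolding U_def by blast
    qed
    also have "open \<dots>"
      using assms(3) by (intro open_UN ballI open_Int open_Collect_less continuous_intros) auto
    finally show ?thesis .
  qed
  have GU: "?G = \<Inter> (range (\<lambda>N. {0..1} \<inter> U N))" unfolding good_set_alt U_def by auto
  have gd: "gdelta_in (top_of_set {0..1}) ?G"
    unfolding GU
    by (intro gdelta_in_Inter open_imp_gdelta_in) (auto intro: openin_open_Int openU)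
  have dense: "{0..1} \<subseteq> closure ?G"
  proof
    fix x :: real assume x: "x \<in> {0..1}"
    show "x \<in> closure ?G" unfolding closure_approachable
    proof (intro allI impI)
      fix e :: real assume e: "e > 0"
      define h where "h = min (e/2) (1/2)"
      have h0: "h > 0" "h \<le> e/2" "h \<le> 1/2" using e by (auto simp: h_def)
      define u where "u = (if x \<le> 1/2 then x else x - h)"
      have sub: "{u..u+h} \<subseteq> {0..1}" using x h0 by (auto simp: u_def)
      have dist: "dist y x < e" if "y \<in> {u..u+h}" for y
        using that h0 x by (auto simp: u_def dist_real_def split: if_splits)
      show "\<exists>y\<in>?G. dist y x < e"
      proof (rule ccontr)
        assume "\<not> (\<exists>y\<in>?G. dist y x < e)"
        then have "{u..u+h} \<subseteq> {0..1} - ?G" using sub dist by blast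
        then have "negligible {u..u+h}" using neg negligible_subset by blast
        then have "negligible (cbox u (u+h))" by simp
        then have "box u (u+h) = {}" by (simp only: negligible_interval)
        then show False using h0 by simp
      qed
    qed
  qed
  show ?thesis using gd dense meas em by blast
qed

end
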